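(* Let $A$ be a complex $r$-matrix of order $n_1\times\cdots\times n_r$, with slices $A^{(j)}_t$. Then \[ \|A\|_r^r\leq\min_{k\in[r]}\ \max_{s\in[n_k]}\ \sum\Big\{|a_{i_1,\ldots,i_r}|\prod_{j\in[r]\setminus\{k\}}|A^{(j)}_{i_j}|_1 \ :\ i_k=s,\ i_j\in[n_j]\text{ for }j\neq k\Big\}. \]
   Context: An $r$-matrix of order $n_1\times\cdots\times n_r$ is a function on $[n_1]\times\cdots\times[n_r]$ with values $a_{i_1,\ldots,i_r}$. For $j\in[r]$ and $t\in[n_j]$, the slice $A^{(j)}_t$ is the $(r-1)$-matrix obtained by fixing $i_j=t$, and $|A^{(j)}_t|_1$ is the sum of the absolute values of its entries. The spectral $r$-norm is $\|A\|_r=\max\{|\sum a_{i_1,\ldots,i_r}\overline{x^{(1)}_{i_1}}\cdots\overline{x^{(r)}_{i_r}}|:\mathbf{x}^{(k)}\in\mathbb{C}^{n_k},\ |\mathbf{x}^{(k)}|_r=1\ \forall k\}$. *)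

theory Defs
  imports "HOL-Analysis.Analysis"
begin

text \<open>An r-matrix of order n_1 x ... x n_r is modelled by r :: nat, the order
  n :: nat \<Rightarrow> nat (n j is the j-th dimension, j < r, 0-based), and
  A :: (nat \<Rightarrow> nat) \<Rightarrow> complex evaluated on multi-indices in rmat_idx r n.\<close>

definition rmat_idx :: "nat \<Rightarrow> (nat \<Rightarrow> nat) \<Rightarrow> (nat \<Rightarrow> nat) set" where
  "rmat_idx r n = PiE {..<r} (\<lambda>j. {..<n j})"

definition slice_norm1 ::
  "((nat \<Rightarrow> nat) \<Rightarrow> complex) \<Rightarrow> nat \<Rightarrow> (nat \<Rightarrow> nat) \<Rightarrow> nat \<Rightarrow> nat \<Rightarrow> real" where
  "slice_norm1 A r n j t = (\<Sum>i\<in>{i \<in> rmat_idx r n. i j = t}. cmod (A i))"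

definition lp_norm :: "real \<Rightarrow> (nat \<Rightarrow> complex) \<Rightarrow> nat \<Rightarrow> real" where
  "lp_norm p v m = (\<Sum>i<m. cmod (v i) powr p) powr (1 / p)"

definition rmat_form ::
  "((nat \<Rightarrow> nat) \<Rightarrow> complex) \<Rightarrow> nat \<Rightarrow> (nat \<Rightarrow> nat) \<Rightarrow> (nat \<Rightarrow> nat \<Rightarrow> complex) \<Rightarrow> complex" where
  "rmat_form A r n x = (\<Sum>i\<in>rmat_idx r n. A i * (\<Prod>k<r. cnj (x k (i k))))"

text \<open>Spectral r-norm: the maximum (= supremum, attained by compactness) of
  |A(x^(1),...,x^(r))| over vectors with |x^(k)|_r = 1.\<close>
definition spectral_rnorm ::
  "((nat \<Rightarrow> nat) \<Rightarrow> complex) \<Rightarrow> nat \<Rightarrow> (nat \<Rightarrow> nat) \<Rightarrow> real" where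
  "spectral_rnorm A r n =
     Sup {cmod (rmat_form A r n x) | x. \<forall>k<r. lp_norm (real r) (x k) (n k) = 1}"

end

theory Submission
  imports Defs
begin

lemma idx_finite: "finite (rmat_idx r n)"
  unfolding rmat_idx_def by (intro finite_PiE) auto

lemma idx_mem: "i \<in> rmat_idx r n \<Longrightarrow> j < r \<Longrightarrow> i j < n j"
  unfolding rmat_idx_def by (auto simp: PiE_def Pi_def)

lemma sum_group_idx:
  assumes "j < r"
  shows "(\<Sum>i\<in>rmat_idx r n. h i) = (\<Sum>t<n j. \<Sum>i\<in>{i \<in> rmat_idx r n. i j = t}. h i)"
proof -
  have "(\<Sum>t<n j. \<Sum>i\<in>{i. i \<in> rmat_idx r n \<and> i j = t}. h i) = (\<Sum>i\<in>rmat_idx r n. h i)"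
    by (rule sum.group) (use idx_finite idx_mem assms in auto)
  then show ?thesis by simp
qed

lemma pow_powr_inv:
  fixes X :: real assumes "0 \<le> X" "0 < r"
  shows "(X ^ r) powr (1 / real r) = X"
proof (cases "X = 0")
  case True then show ?thesis using assms by simp
next
  case False
  then have "X > 0" using assms by simp
  then show ?thesis using assms by (simp add: powr_realpow[symmetric] powr_powr)
qed

lemma powr_inv_pow:
  fixes M :: real assumes "0 < M" "0 < r"
  shows "(M powr (1 / real r)) ^ r = M"
  using assms by (simp add: powr_realpow[symmetric] powr_powr)


lemma core:
  fixes w :: "(nat \<Rightarrow> nat) \<Rightarrow> real" and y :: "nat \<Rightarrow> nat \<Rightarrow> real"
  assumes k: "k < r" and w0: "\<And>i. w i \<ge> 0" and y0: "\<And>j t. y j t \<ge> 0"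
    and ysum: "\<And>j. j < r \<Longrightarrow> (\<Sum>t<n j. y j t ^ r) = 1"
    and Sdef: "\<And>j t. S j t = (\<Sum>i\<in>{i \<in> rmat_idx r n. i j = t}. w i)"
  shows "(\<Sum>i\<in>rmat_idx r n. w i * (\<Prod>j<r. y j (i j))) ^ r \<le>
    Max ((\<lambda>s. \<Sum>i\<in>{i \<in> rmat_idx r n. i k = s}. w i * (\<Prod>j\<in>{..<r} - {k}. S j (i j))) ` {..<n k})"
proof -
  define idx where "idx = rmat_idx r n"
  define P where "P i = (\<Prod>j\<in>{..<r} - {k}. S j (i j))" for i
  define G where "G s = (\<Sum>i\<in>{i \<in> idx. i k = s}. w i * P i)" for s
  define M where "M = Max (G ` {..<n k})"
  have r0: "r > 0" using k by simp
  have fin: "finite idx" unfolding idx_def by (rule idx_finite)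
  have nk: "n k > 0"
  proof (rule ccontr)
    assume "\<not> 0 < n k" then have "n k = 0" by simp
    then show False using ysum[OF k] by simp
  qed
  have S0: "S j t \<ge> 0" for j t unfolding Sdef by (rule sum_nonneg) (simp add: w0)
  have P0: "P i \<ge> 0" for i unfolding P_def by (rule prod_nonneg) (simp add: S0)
  have Sge: "w i \<le> S j (i j)" if "i \<in> idx" for i j
    unfolding Sdef using that fin by (intro member_le_sum) (auto simp: w0 idx_def)
  have Spos: "S j (i j) > 0" if "i \<in> idx" "w i > 0" for i j
    using Sge[OF that(1), of j] that(2) by simp
  have Ppos: "P i > 0" if "i \<in> idx" "w i > 0" for i
    unfolding P_def by (rule prod_pos) (use Spos that in auto)
  have G0: "G s \<ge> 0" for s unfolding G_def by (rule sum_nonneg) (simp add: w0 P0)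
  have GM: "G s \<le> M" if "s < n k" for s
    unfolding M_def using that by (intro Max_ge) auto
  have M0: "M \<ge> 0" using GM[OF nk] G0[of 0] by simp
  have wPG: "w i * P i \<le> G (i k)" if "i \<in> idx" for i
    unfolding G_def using that fin by (intro member_le_sum) (auto simp: w0 P0)
  have goalM: "?thesis \<longleftrightarrow> (\<Sum>i\<in>idx. w i * (\<Prod>j<r. y j (i j))) ^ r \<le> M"
    unfolding M_def G_def P_def idx_def ..
  show ?thesis
  proof (cases "M = 0")
    case True
    have "w i = 0" if "i \<in> idx" for i
    proof (rule ccontr)
      assume "w i \<noteq> 0" then have wp: "w i > 0" using w0[of i] by simp
      have "w i * P i > 0" using Ppos[OF that wp] wp by simp
      moreover have "G (i k) \<le> 0" using GM[of "i k"] True idx_mem[of i r n k] that k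
        by (simp add: idx_def)
      ultimately show False using wPG[OF that] by simp
    qed
    then have "(\<Sum>i\<in>idx. w i * (\<Prod>j<r. y j (i j))) = 0" by simp
    then show ?thesis using goalM True r0 by (simp add: power_0_left)
  next
    case False
    then have Mpos: "M > 0" using M0 by simp
    define b where "b i j = (if j = k then w i * y k (i k) ^ r * P i / M
        else w i * y j (i j) ^ r / S j (i j))" for i j
    have b0: "b i j \<ge> 0" for i j unfolding b_def using w0 y0 P0 S0 Mpos by auto
    have claim1: "w i * (\<Prod>j<r. y j (i j)) \<le> M powr (1 / real r) * (\<Sum>j<r. b i j / r)"
      if "i \<in> idx" for i
    proof (cases "w i = 0")
      case True then show ?thesis using b0 by (simp add: sum_nonneg)
    next
      case False
      then have wp: "w i > 0" using w0[of i] by simp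
      have Sp: "S j (i j) > 0" for j using Spos[OF that wp] .
      have "(\<Prod>j\<in>{..<r} - {k}. b i j) = (\<Prod>j\<in>{..<r} - {k}. w i * y j (i j) ^ r / S j (i j))"
        by (rule prod.cong) (auto simp: b_def)
      also have "\<dots> = w i ^ (r - 1) * (\<Prod>j\<in>{..<r} - {k}. y j (i j) ^ r) / P i"
        using k by (simp add: prod.distrib prod_dividef P_def card_Diff_singleton)
      finally have e1: "(\<Prod>j\<in>{..<r} - {k}. b i j) = w i ^ (r - 1) * (\<Prod>j\<in>{..<r} - {k}. y j (i j) ^ r) / P i" .
      have "(\<Prod>j<r. b i j) = b i k * (\<Prod>j\<in>{..<r} - {k}. b i j)"
        using k by (simp add: prod.remove)
      also have "\<dots> = (w i * y k (i k) ^ r * P i / M) * (w i ^ (r - 1) * (\<Prod>j\<in>{..<r} - {k}. y j (i j) ^ r) / P i)"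
        using e1 by (simp add: b_def)
      also have "\<dots> = (w i * w i ^ (r - 1)) * (y k (i k) ^ r * (\<Prod>j\<in>{..<r} - {k}. y j (i j) ^ r)) / M"
        using Ppos[OF that wp] by (simp add: field_simps)
      also have "y k (i k) ^ r * (\<Prod>j\<in>{..<r} - {k}. y j (i j) ^ r) = (\<Prod>j<r. y j (i j) ^ r)"
        using k by (simp add: prod.remove)
      also have "w i * w i ^ (r - 1) = w i ^ r" using r0
        by (metis Suc_diff_1 power_Suc)
      finally have e2: "(\<Prod>j<r. b i j) = (w i * (\<Prod>j<r. y j (i j))) ^ r / M"
        by (simp add: power_mult_distrib prod_power_distrib)
      have X0: "w i * (\<Prod>j<r. y j (i j)) \<ge> 0" using w0 y0 by (simp add: prod_nonneg)
      have "(\<Prod>j<r. b i j) powr (1 / real r) = w i * (\<Prod>j<r. y j (i j)) / M powr (1 / real r)"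
        unfolding e2 using X0 Mpos r0 by (simp add: powr_divide pow_powr_inv)
      moreover have "(\<Prod>j<r. b i j) powr (1 / real (card {..<r})) \<le> (\<Sum>j<r. b i j / card {..<r})"
        by (rule arith_geom_mean) (use r0 b0 in auto)
      ultimately have "w i * (\<Prod>j<r. y j (i j)) / M powr (1 / real r) \<le> (\<Sum>j<r. b i j / r)"
        by simp
      then show ?thesis using Mpos by (simp add: divide_le_eq mult.commute)
    qed
    have claim2: "(\<Sum>i\<in>idx. b i j) \<le> 1" if j: "j < r" for j
    proof (cases "j = k")
      case True
      have "(\<Sum>i\<in>idx. b i j) = (\<Sum>t<n k. \<Sum>i\<in>{i \<in> idx. i k = t}. b i k)"
        unfolding idx_def True using sum_group_idx[OF k] by blast
      also have "\<dots> = (\<Sum>t<n k. y k t ^ r * (G t / M))"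
        unfolding G_def by (intro sum.cong refl) (auto simp: b_def sum_distrib_left sum_divide_distrib intro!: sum.cong)
      also have "\<dots> \<le> (\<Sum>t<n k. y k t ^ r * 1)"
        using GM Mpos G0 y0 by (intro sum_mono mult_left_mono) (auto simp: divide_le_eq)
      finally show ?thesis using ysum[OF k] by simp
    next
      case False
      have "(\<Sum>i\<in>idx. b i j) = (\<Sum>t<n j. \<Sum>i\<in>{i \<in> idx. i j = t}. b i j)"
        unfolding idx_def using sum_group_idx[OF j] by blast
      also have "\<dots> = (\<Sum>t<n j. y j t ^ r * (S j t / S j t))"
      proof (intro sum.cong refl)
        fix t
        have "(\<Sum>i\<in>{i \<in> idx. i j = t}. b i j) = (\<Sum>i\<in>{i \<in> idx. i j = t}. w i * (y j t ^ r / S j t))"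
          using False by (intro sum.cong refl) (auto simp: b_def)
        also have "\<dots> = S j t * (y j t ^ r / S j t)"
          unfolding Sdef[of j t] idx_def by (rule sum_distrib_right[symmetric])
        finally show "(\<Sum>i\<in>{i \<in> idx. i j = t}. b i j) = y j t ^ r * (S j t / S j t)" by simp
      qed
      also have "\<dots> \<le> (\<Sum>t<n j. y j t ^ r * 1)"
        using y0 S0 by (intro sum_mono mult_left_mono) auto
      finally show ?thesis using ysum[OF j] by simp
    qed
    have "(\<Sum>i\<in>idx. w i * (\<Prod>j<r. y j (i j))) \<le> (\<Sum>i\<in>idx. M powr (1 / real r) * (\<Sum>j<r. b i j / r))"
      using claim1 by (rule sum_mono)
    also have "\<dots> = M powr (1 / real r) / r * (\<Sum>j<r. \<Sum>i\<in>idx. b i j)"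
    proof -
      have "(\<Sum>i\<in>idx. M powr (1 / real r) * (\<Sum>j<r. b i j / r)) = (\<Sum>i\<in>idx. M powr (1 / real r) / r * (\<Sum>j<r. b i j))"
        by (simp add: sum_divide_distrib[symmetric])
      also have "\<dots> = M powr (1 / real r) / r * (\<Sum>i\<in>idx. \<Sum>j<r. b i j)"
        by (simp add: sum_distrib_left)
      also have "(\<Sum>i\<in>idx. \<Sum>j<r. b i j) = (\<Sum>j<r. \<Sum>i\<in>idx. b i j)"
        by (rule sum.swap)
      finally show ?thesis .
    qed
    also have "\<dots> \<le> M powr (1 / real r) / r * (\<Sum>j<r. 1)"
      using claim2 by (intro mult_left_mono sum_mono) auto
    also have "\<dots> = M powr (1 / real r)" using r0 by simp
    finally have bnd: "(\<Sum>i\<in>idx. w i * (\<Prod>j<r. y j (i j))) \<le> M powr (1 / real r)" .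
    have "(\<Sum>i\<in>idx. w i * (\<Prod>j<r. y j (i j))) ^ r \<le> (M powr (1 / real r)) ^ r"
      using bnd w0 y0 by (intro power_mono) (auto intro!: sum_nonneg mult_nonneg_nonneg prod_nonneg)
    also have "\<dots> = M" using Mpos r0 by (rule powr_inv_pow)
    finally show ?thesis using goalM by simp
  qed
qed


lemma lp_one:
  assumes "lp_norm (real r) v m = 1" "r \<ge> 1"
  shows "(\<Sum>t<m. cmod (v t) ^ r) = 1"
proof -
  have e: "cmod (v t) powr real r = cmod (v t) ^ r" for t
  proof (cases "v t = 0")
    case True then show ?thesis using assms(2) by (simp add: power_0_left)
  next
    case False then show ?thesis by (simp add: powr_realpow)
  qed
  define T where "T = (\<Sum>t<m. cmod (v t) ^ r)"
  have T0: "T \<ge> 0" unfolding T_def by (simp add: sum_nonneg)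
  have "T powr (1 / real r) = 1" using assms(1) unfolding lp_norm_def T_def e .
  then have "T \<noteq> 0" by auto
  then have "T = (T powr (1 / real r)) powr real r" using T0 assms(2) by (simp add: powr_powr)
  also have "\<dots> = 1" using \<open>T powr (1 / real r) = 1\<close> by simp
  finally show ?thesis unfolding T_def .
qed

lemma form_bound:
  "cmod (rmat_form A r n x) \<le> (\<Sum>i\<in>rmat_idx r n. cmod (A i) * (\<Prod>j<r. cmod (x j (i j))))"
  unfolding rmat_form_def
  by (rule order_trans[OF norm_sum]) (simp add: norm_mult prod_norm[symmetric])

theorem theorem17:
  fixes A :: "(nat \<Rightarrow> nat) \<Rightarrow> complex" and r :: nat and n :: "nat \<Rightarrow> nat"
  assumes "r \<ge> 1" and "\<forall>j<r. n j \<ge> 1"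
  shows "spectral_rnorm A r n ^ r \<le>
    Min ((\<lambda>k. Max ((\<lambda>s. \<Sum>i\<in>{i \<in> rmat_idx r n. i k = s}.
                 cmod (A i) * (\<Prod>j\<in>{..<r} - {k}. slice_norm1 A r n j (i j))) ` {..<n k}))
         ` {..<r})"
proof -
  define Mk where "Mk k = Max ((\<lambda>s. \<Sum>i\<in>{i \<in> rmat_idx r n. i k = s}.
                 cmod (A i) * (\<Prod>j\<in>{..<r} - {k}. slice_norm1 A r n j (i j))) ` {..<n k})" for k
  define m where "m = Min (Mk ` {..<r})"
  define Sset where "Sset = {cmod (rmat_form A r n x) | x. \<forall>k<r. lp_norm (real r) (x k) (n k) = 1}"
  have r0: "r > 0" using assms(1) by simp
  have bound: "s ^ r \<le> m" and s0: "s \<ge> 0" if sin: "s \<in> Sset" for s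
  proof -
    obtain x where s: "s = cmod (rmat_form A r n x)" and x: "\<forall>k<r. lp_norm (real r) (x k) (n k) = 1"
      using sin unfolding Sset_def by blast
    show "s \<ge> 0" using s by simp
    have sk: "s ^ r \<le> Mk k" if k: "k < r" for k
    proof -
      have "s ^ r \<le> (\<Sum>i\<in>rmat_idx r n. cmod (A i) * (\<Prod>j<r. cmod (x j (i j)))) ^ r"
        unfolding s by (rule power_mono[OF form_bound]) simp
      also have "\<dots> \<le> Mk k" unfolding Mk_def
        by (rule core[OF k]) (use x lp_one assms(1) in \<open>auto simp: slice_norm1_def\<close>)
      finally show ?thesis .
    qed
    show "s ^ r \<le> m" unfolding m_def using r0 sk by (auto intro!: Min.boundedI)
  qed
  define x0 :: "nat \<Rightarrow> nat \<Rightarrow> complex" where "x0 k t = (if t = 0 then 1 else 0)" for k t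
  have "lp_norm (real r) (x0 k) (n k) = 1" if "k < r" for k
  proof -
    have "(\<Sum>i<n k. cmod (x0 k i) powr real r) = (\<Sum>i\<in>{0}. cmod (x0 k i) powr real r)"
      using assms(2) that by (intro sum.mono_neutral_right) (auto simp: x0_def)
    then show ?thesis unfolding lp_norm_def by (simp add: x0_def)
  qed
  then have ne: "Sset \<noteq> {}" unfolding Sset_def by blast
  have m0: "m \<ge> 0" using ne bound s0
    by (metis all_not_in_conv order_trans zero_le_power)
  have le_root: "s \<le> root r m" if "s \<in> Sset" for s
  proof -
    have "s = root r (s ^ r)" using s0[OF that] r0 by (simp add: real_root_power_cancel)
    also have "\<dots> \<le> root r m" using bound[OF that] r0 by (simp add: real_root_le_mono)
    finally show ?thesis .
  qed
  have sup_le: "Sup Sset \<le> root r m" using ne le_root by (rule cSup_least)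
  obtain s where sS: "s \<in> Sset" using ne by blast
  have "0 \<le> s" using s0[OF sS] .
  also have "s \<le> Sup Sset" using sS le_root by (intro cSup_upper) (auto simp: bdd_above_def)
  finally have sup0: "Sup Sset \<ge> 0" .
  have "spectral_rnorm A r n ^ r = Sup Sset ^ r" unfolding spectral_rnorm_def Sset_def ..
  also have "\<dots> \<le> root r m ^ r" by (rule power_mono[OF sup_le sup0])
  also have "\<dots> = m" using m0 r0 by (simp add: real_root_pow_pos2)
  finally show ?thesis unfolding m_def Mk_def .
qed

end
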